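(* Let $p\ge 1$, let $\Theta_{s,a}\subseteq\mathbb{R}^p$ be a set of vectors, and let $\{P_\beta,\ \beta\in\Theta_{s,a}\}$ be a family of probability distributions on a measurable space $(\mathcal{X},\mathcal{U})$ (extended to the support of the prior below); an observation $Y$ is drawn from $P_\beta$ and $\mathbf{E}_\beta$ denotes expectation with respect to $P_\beta$. For any $s<p$, $q\ge 1$ and any probability measure $\pi$ on $\mathbb{R}^p$ (with $\pi(\beta\in\Theta_{s,a})>0$), there exists $C_q>0$ such that $$\inf_{\hat\beta}\sup_{\beta\in\Theta_{s,a}}\mathbf{E}_\beta\|\hat\beta-\beta\|_q^q\ \ge\ \inf_{\hat T}\mathbb{E}_\pi\mathbf{E}_\beta\sum_{j=1}^p|\hat T_j(Y)-\beta_j|^q\ -\ C_q\,\mathbb{E}_\pi\Big[\big(\mathbf{E}(\|\beta^A\|_q^q\mid Y)+\|\beta\|_q^q\big)\mathbf{1}(\beta\notin\Theta_{s,a})\Big],$$ where $\beta^A:=\beta\,\mathbf{1}(\beta\in\Theta_{s,a})=(\beta_1\mathbf{1}(\beta\in\Theta_{s,a}),\dots,\beta_p\mathbf{1}(\beta\in\Theta_{s,a}))$, $\inf_{\hat\beta}$ is the infimum over all estimators, and $\inf_{\hat T}$ is the infimum over all estimators $\hat T(Y)=(\hat T_1(Y),\dots,\hat T_p(Y))$ with values in $\mathbb{R}^p$.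
   Context: $\mathbb{E}_\pi$ denotes expectation with respect to $\beta\sim\pi$ (and $\mathbb{E}_\pi\mathbf{E}_\beta$ the expectation under the joint law where $\beta\sim\pi$ and, given $\beta$, $Y\sim P_\beta$). $\mathbf{E}(\|\beta^A\|_q^q\mid Y)$ denotes the conditional expectation of $\|\beta^A\|_q^q$ given $Y$ when $\beta$ is distributed according to $\pi$ conditioned on the event $\{\beta\in\Theta_{s,a}\}$ and $Y\sim P_\beta$. $\|x\|_q$ is the $\ell_q$ norm. *)

theory Defs
  imports "HOL-Probability.Probability"
begin

definition lq_pow :: "real \<Rightarrow> real^'n \<Rightarrow> real" where
  "lq_pow q x = (\<Sum>j\<in>UNIV. \<bar>x $ j\<bar> powr q)"

definition betaA :: "(real^'n) set \<Rightarrow> real^'n \<Rightarrow> real^'n" where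
  "betaA Theta b = (\<chi> j. b $ j * indicator Theta b)"

definition cond_prior :: "(real^'n) measure \<Rightarrow> (real^'n) set \<Rightarrow> (real^'n) measure" where
  "cond_prior prior Theta = density prior (\<lambda>b. indicator Theta b / emeasure prior Theta)"

definition minimax_risk ::
  "'x measure \<Rightarrow> (real^'n \<Rightarrow> 'x measure) \<Rightarrow> (real^'n) set \<Rightarrow> real \<Rightarrow> ennreal" where
  "minimax_risk X P Theta q =
     (INF bh \<in> borel_measurable X. SUP b \<in> Theta.
        \<integral>\<^sup>+ y. ennreal (lq_pow q (bh y - b)) \<partial>(P b))"

definition bayes_risk ::
  "'x measure \<Rightarrow> (real^'n \<Rightarrow> 'x measure) \<Rightarrow> (real^'n) measure \<Rightarrow> real \<Rightarrow> ennreal" where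
  "bayes_risk X P prior q =
     (INF T \<in> borel_measurable X.
        \<integral>\<^sup>+ b. (\<integral>\<^sup>+ y. ennreal (\<Sum>j\<in>UNIV. \<bar>T y $ j - b $ j\<bar> powr q) \<partial>(P b)) \<partial>prior)"

text \<open>g is a version of E(|beta^A|_q^q | Y) under the joint law beta ~ prior( . | Theta),
  Y ~ P_beta: g(Y) is sigma(Y)-measurable and has the same integrals as |beta^A|_q^q
  over every event {Y in A}.\<close>
definition is_post_moment ::
  "'x measure \<Rightarrow> (real^'n \<Rightarrow> 'x measure) \<Rightarrow> (real^'n) measure \<Rightarrow> (real^'n) set \<Rightarrow> real
     \<Rightarrow> ('x \<Rightarrow> ennreal) \<Rightarrow> bool" where
  "is_post_moment X P prior Theta q g \<longleftrightarrow> g \<in> borel_measurable X \<and>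
     (\<forall>A \<in> sets X.
        (\<integral>\<^sup>+ b. (\<integral>\<^sup>+ y. indicator A y * g y \<partial>(P b)) \<partial>(cond_prior prior Theta)) =
        (\<integral>\<^sup>+ b. (\<integral>\<^sup>+ y. indicator A y * ennreal (lq_pow q (betaA Theta b)) \<partial>(P b))
            \<partial>(cond_prior prior Theta)))"

definition remainder_term ::
  "(real^'n \<Rightarrow> 'x measure) \<Rightarrow> (real^'n) measure \<Rightarrow> (real^'n) set \<Rightarrow> real
     \<Rightarrow> ('x \<Rightarrow> ennreal) \<Rightarrow> ennreal" where
  "remainder_term P prior Theta q g =
     (\<integral>\<^sup>+ b. (\<integral>\<^sup>+ y. (g y + ennreal (lq_pow q b)) * indicator (- Theta) b \<partial>(P b)) \<partial>prior)"

end

theory Submission imports Defs begin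
lemma lq_pow_meas[measurable]: "lq_pow q \<in> borel_measurable borel"
  unfolding lq_pow_def by measurable

lemma powr_tri: assumes "q \<ge> 1" shows "\<bar>a + b::real\<bar> powr q \<le> 2 powr q * (\<bar>a\<bar> powr q + \<bar>b\<bar> powr q)"
proof -
  have "\<bar>a + b\<bar> \<le> 2 * max \<bar>a\<bar> \<bar>b\<bar>" by auto
  then have "\<bar>a + b\<bar> powr q \<le> (2 * max \<bar>a\<bar> \<bar>b\<bar>) powr q"
    using assms by (intro powr_mono2) auto
  also have "\<dots> = 2 powr q * max \<bar>a\<bar> \<bar>b\<bar> powr q" by (simp add: powr_mult)
  also have "max \<bar>a\<bar> \<bar>b\<bar> powr q \<le> \<bar>a\<bar> powr q + \<bar>b\<bar> powr q"
    by (cases "\<bar>a\<bar> \<le> \<bar>b\<bar>") (auto simp: max_def)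
  finally show ?thesis by (simp add: mult_left_mono)
qed

lemma lq_pow_tri: assumes "q \<ge> 1" shows "lq_pow q (x + y) \<le> 2 powr q * (lq_pow q x + lq_pow q y)"
  unfolding lq_pow_def sum_distrib_left sum.distrib[symmetric]
  by (intro sum_mono) (metis powr_tri[OF assms] distrib_left vector_add_component)

lemma lq_pow_nonneg: "lq_pow q x \<ge> 0" unfolding lq_pow_def by (intro sum_nonneg) auto
lemma lq_pow_zero: "q > 0 \<Longrightarrow> lq_pow q 0 = 0" unfolding lq_pow_def by simp
lemma lq_pow_uminus: "lq_pow q (- x) = lq_pow q x" unfolding lq_pow_def by simp

lemma ennreal_cancel_aux:
  fixes G X t :: ennreal
  assumes "t > 0" "t < top" "G < top" "2 * t * G \<le> t * (X + G)"
  shows "G \<le> X"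
proof (cases "X = top")
  case False
  obtain g x tt where "G = ennreal g" "X = ennreal x" "t = ennreal tt" "g \<ge> 0" "x \<ge> 0" "tt > 0"
    using assms False by (metis ennreal_cases ennreal_less_zero_iff infinity_ennreal_def less_irrefl top.not_eq_extremum not_less_iff_gr_or_eq ennreal_eq_0_iff zero_less_iff_neq_zero)
  note c = this
  have eqs: "2 * t * G = ennreal (2 * tt * g)" "t * (X + G) = ennreal (tt * (x + g))"
    using c by (simp_all add: ennreal_mult ennreal_plus[symmetric] del: ennreal_plus)
  have "ennreal (2 * tt * g) \<le> ennreal (tt * (x + g))" using assms(4) by (simp only: eqs)
  then have "2 * tt * g \<le> tt * (x + g)" using c by (subst (asm) ennreal_le_iff) auto
  then have "tt * g \<le> tt * x" by (simp add: algebra_simps)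
  then have "g \<le> x" using c by (meson mult_le_cancel_left_pos)
  then show ?thesis using c by simp
qed simp

lemma INF_add_const_set:
  fixes f :: "'a \<Rightarrow> ennreal"
  assumes "I \<noteq> {}"
  shows "(INF i\<in>I. f i + c) = (INF i\<in>I. f i) + c"
  using continuous_at_Inf_mono[of "\<lambda>x. x + c" "f`I"]
  using continuous_add[of "at_right (Inf (f ` I))", of "\<lambda>x. x" "\<lambda>x. c"] assms
  by (auto simp: mono_def image_comp)
lemma betaA_eq: "betaA Th b = (indicator Th b :: real) *\<^sub>R b"
  by (simp add: betaA_def vec_eq_iff mult.commute)

lemma int_meas:
  assumes "(\<lambda>(b,y). h b y) \<in> borel_measurable (borel \<Otimes>\<^sub>M X)"
    "P \<in> borel \<rightarrow>\<^sub>M subprob_algebra X" "sets M = sets borel"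
  shows "(\<lambda>b. \<integral>\<^sup>+y. h b y \<partial>P b) \<in> borel_measurable M"
  by (subst measurable_cong_sets[OF assms(3) refl]) (rule nn_integral_measurable_subprob_algebra2[OF assms(1,2)])

lemma inner_meas:
  assumes "(\<lambda>(b,y). h b y) \<in> borel_measurable (borel \<Otimes>\<^sub>M X)" "sets (P b) = sets X"
  shows "h b \<in> borel_measurable (P b)"
proof -
  have "(\<lambda>y. (\<lambda>(b,y). h b y) (b, y)) \<in> borel_measurable X"
    using measurable_Pair2[OF assms(1)] by simp
  then show ?thesis by (subst measurable_cong_sets[OF assms(2) refl]) simp
qed

lemma II_add:
  assumes h1: "(\<lambda>(b,y). h1 b y) \<in> borel_measurable (borel \<Otimes>\<^sub>M X)"
    and h2: "(\<lambda>(b,y). h2 b y) \<in> borel_measurable (borel \<Otimes>\<^sub>M X)"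
    and P: "P \<in> borel \<rightarrow>\<^sub>M subprob_algebra X" "sets M = sets borel" "\<And>b. sets (P b) = sets X"
  shows "(\<integral>\<^sup>+b. (\<integral>\<^sup>+y. h1 b y + h2 b y \<partial>P b) \<partial>M)
    = (\<integral>\<^sup>+b. (\<integral>\<^sup>+y. h1 b y \<partial>P b) \<partial>M) + (\<integral>\<^sup>+b. (\<integral>\<^sup>+y. h2 b y \<partial>P b) \<partial>M)"
proof -
  have "(\<integral>\<^sup>+b. (\<integral>\<^sup>+y. h1 b y + h2 b y \<partial>P b) \<partial>M)
     = (\<integral>\<^sup>+b. (\<integral>\<^sup>+y. h1 b y \<partial>P b) + (\<integral>\<^sup>+y. h2 b y \<partial>P b) \<partial>M)"
    by (intro nn_integral_cong nn_integral_add inner_meas[OF h1 P(3)] inner_meas[OF h2 P(3)])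
  also have "\<dots> = (\<integral>\<^sup>+b. (\<integral>\<^sup>+y. h1 b y \<partial>P b) \<partial>M) + (\<integral>\<^sup>+b. (\<integral>\<^sup>+y. h2 b y \<partial>P b) \<partial>M)"
    by (intro nn_integral_add int_meas[OF h1 P(1,2)] int_meas[OF h2 P(1,2)])
  finally show ?thesis .
qed

lemma II_cmult:
  assumes h1: "(\<lambda>(b,y). h1 b y) \<in> borel_measurable (borel \<Otimes>\<^sub>M X)"
    and P: "P \<in> borel \<rightarrow>\<^sub>M subprob_algebra X" "sets M = sets borel" "\<And>b. sets (P b) = sets X"
  shows "(\<integral>\<^sup>+b. (\<integral>\<^sup>+y. c * h1 b y \<partial>P b) \<partial>M)
    = c * (\<integral>\<^sup>+b. (\<integral>\<^sup>+y. h1 b y \<partial>P b) \<partial>M)"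
proof -
  have "(\<integral>\<^sup>+b. (\<integral>\<^sup>+y. c * h1 b y \<partial>P b) \<partial>M)
     = (\<integral>\<^sup>+b. c * (\<integral>\<^sup>+y. h1 b y \<partial>P b) \<partial>M)"
    by (intro nn_integral_cong nn_integral_cmult inner_meas[OF h1 P(3)])
  also have "\<dots> = c * (\<integral>\<^sup>+b. (\<integral>\<^sup>+y. h1 b y \<partial>P b) \<partial>M)"
    by (intro nn_integral_cmult int_meas[OF h1 P(1,2)])
  finally show ?thesis .
qed

theorem theorem1:
  fixes X :: "'x measure" and P :: "real^'n \<Rightarrow> 'x measure"
    and prior :: "(real^'n) measure" and Theta :: "(real^'n) set" and q :: real
  assumes "q \<ge> 1"
    and "Theta \<in> sets borel"
    and "\<And>b. prob_space (P b)"
    and "\<And>b. sets (P b) = sets X"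
    and "P \<in> borel \<rightarrow>\<^sub>M subprob_algebra X"
    and "prob_space prior"
    and "sets prior = sets borel"
    and "emeasure prior Theta > 0"
  shows "\<exists>C::real > 0. \<forall>g. is_post_moment X P prior Theta q g \<longrightarrow>
           bayes_risk X P prior q \<le> minimax_risk X P Theta q + ennreal C * remainder_term P prior Theta q g"
proof -
  have q0: "q > 0" using assms(1) by simp
  note Thm[measurable] = assms(2)
  note Pm = assms(5)
  note sP = assms(7)
  note sPb = assms(4)
  have Th_prior: "Theta \<in> sets prior" using sP assms(2) by simp
  define pT where "pT = emeasure prior Theta"
  have pT0: "pT > 0" using assms(8) pT_def by simp
  have pT1: "pT \<le> 1" unfolding pT_def using prob_space.emeasure_le_1[OF assms(6)] by simp
  have pTtop: "pT \<noteq> top" using pT1 by (auto simp: top_unique)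
  define cond where "cond = cond_prior prior Theta"
  have scond: "sets cond = sets borel" unfolding cond_def cond_prior_def using sP by simp
  have measp: "\<And>f::real^'n \<Rightarrow> ennreal. f \<in> borel_measurable borel \<Longrightarrow> f \<in> borel_measurable prior"
    by (subst measurable_cong_sets[OF sP refl]) simp
  note Th_prior[measurable]
  have densm[measurable]: "(\<lambda>b. indicator Theta b / pT) \<in> borel_measurable prior" by measurable
  have indm: "(indicator S :: real^'n \<Rightarrow> ennreal) \<in> borel_measurable prior" if "S \<in> sets borel" for S
    using that by (intro measp) simp
  have cond_int: "\<And>f. f \<in> borel_measurable prior \<Longrightarrow>
      integral\<^sup>N cond f = (\<integral>\<^sup>+b. indicator Theta b / pT * f b \<partial>prior)"
    unfolding cond_def cond_prior_def pT_def
    by (rule nn_integral_density[OF densm[unfolded pT_def]])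
  have theta_part: "\<And>f. f \<in> borel_measurable prior \<Longrightarrow>
      (\<integral>\<^sup>+b. f b * indicator Theta b \<partial>prior) = pT * integral\<^sup>N cond f"
  proof -
    fix f :: "real^'n \<Rightarrow> ennreal" assume fm[measurable]: "f \<in> borel_measurable prior"
    have "pT * integral\<^sup>N cond f = pT * (\<integral>\<^sup>+b. indicator Theta b / pT * f b \<partial>prior)"
      using cond_int[OF fm] by simp
    also have "\<dots> = (\<integral>\<^sup>+b. pT * (indicator Theta b / pT * f b) \<partial>prior)"
      by (rule nn_integral_cmult[symmetric]) measurable
    also have "\<dots> = (\<integral>\<^sup>+b. f b * indicator Theta b \<partial>prior)"
    proof (intro nn_integral_cong)
      fix b have pp: "pT * (1 / pT) = 1" using pT0 pTtop
        by (simp add: ennreal_times_divide top.not_eq_extremum)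
      show "pT * (indicator Theta b / pT * f b) = f b * indicator Theta b"
      proof (cases "b \<in> Theta")
        case True
        then have "pT * (indicator Theta b / pT * f b) = (pT * (1 / pT)) * f b"
          by (simp only: indicator_simps mult.assoc)
        then show ?thesis using True pp by simp
      qed simp
    qed
    finally show "(\<integral>\<^sup>+b. f b * indicator Theta b \<partial>prior) = pT * integral\<^sup>N cond f" by simp
  qed
  define S where "S bh = (SUP b\<in>Theta. \<integral>\<^sup>+ y. ennreal (lq_pow q (bh y - b)) \<partial>(P b))" for bh :: "'x \<Rightarrow> real^'n"
  define C where "C = 2 powr q * (2 * 2 powr q)"
  show ?thesis
  proof (intro exI[of _ C] conjI allI impI)
    show "C > 0" unfolding C_def by simp
    fix g assume pm: "is_post_moment X P prior Theta q g"
    then have gm[measurable]: "g \<in> borel_measurable X" by (simp add: is_post_moment_def)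
    have pmA: "\<And>B. B \<in> sets X \<Longrightarrow>
        (\<integral>\<^sup>+ b. (\<integral>\<^sup>+ y. indicator B y * g y \<partial>(P b)) \<partial>cond) =
        (\<integral>\<^sup>+ b. (\<integral>\<^sup>+ y. indicator B y * ennreal (lq_pow q (betaA Theta b)) \<partial>(P b)) \<partial>cond)"
      using pm by (simp add: is_post_moment_def cond_def)
    define rem where "rem = remainder_term P prior Theta q g"
    have main: "bayes_risk X P prior q \<le> S bh + ennreal C * rem" if bhm[measurable]: "bh \<in> borel_measurable X" for bh
    proof -
      define t where "t = ennreal (2 powr q)"
      define c' where "c' = 2 * t"
      have t0: "t > 0" "t < top" unfolding t_def by simp_all
      have c'1: "c' \<ge> 1" unfolding c'_def t_def
      proof -
        have "(1::ennreal) \<le> ennreal (2 powr q)" using q0 ge_one_powr_ge_zero[of 2 q] by simp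
        also have "\<dots> \<le> 2 * ennreal (2 powr q)" by (simp add: mult_2 le_add2)
        finally show "1 \<le> 2 * ennreal (2 powr q)" .
      qed
      have Ct: "ennreal C = t * c'" unfolding C_def t_def c'_def
        by (simp add: ennreal_mult ennreal_mult'[symmetric] mult.commute)
      define A where "A = {y \<in> space X. c' * g y < ennreal (lq_pow q (bh y))}"
      have Am[measurable]: "A \<in> sets X" unfolding A_def by measurable
      define T where "T y = (if y \<in> A then 0 else bh y)" for y
      have Tm[measurable]: "T \<in> borel_measurable X" unfolding T_def by measurable
      have spP: "\<And>b. space (P b) = space X" using sets_eq_imp_space_eq[OF sPb] by simp
      have TL: "ennreal (lq_pow q (T y)) \<le> c' * g y" if "y \<in> space X" for y
        using that q0 by (cases "y \<in> A") (auto simp: T_def A_def lq_pow_zero not_less)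
      define risk where "risk T' b = (\<integral>\<^sup>+ y. ennreal (lq_pow q (T' y - b)) \<partial>(P b))" for T' :: "'x \<Rightarrow> real^'n" and b
      have riskm: "risk T' \<in> borel_measurable M" if [measurable]: "T' \<in> borel_measurable X"
        and sM: "sets M = sets borel" for T' and M :: "(real^'n) measure"
        unfolding risk_def by (rule int_meas[OF _ Pm sM]) measurable
      have step1: "bayes_risk X P prior q \<le> (\<integral>\<^sup>+ b. risk T b \<partial>prior)"
        unfolding bayes_risk_def risk_def
        by (rule INF_lower2[OF Tm]) (simp add: lq_pow_def)
      have split: "(\<integral>\<^sup>+ b. risk T b \<partial>prior) =
          (\<integral>\<^sup>+ b. risk T b * indicator Theta b \<partial>prior) + (\<integral>\<^sup>+ b. risk T b * indicator (- Theta) b \<partial>prior)"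
      proof -
        have "(\<integral>\<^sup>+ b. risk T b \<partial>prior) = (\<integral>\<^sup>+ b. risk T b * indicator Theta b + risk T b * indicator (- Theta) b \<partial>prior)"
          by (intro nn_integral_cong) (auto simp: indicator_def)
        also have "\<dots> = (\<integral>\<^sup>+ b. risk T b * indicator Theta b \<partial>prior) + (\<integral>\<^sup>+ b. risk T b * indicator (- Theta) b \<partial>prior)"
          using riskm[OF Tm sP] indm[OF assms(2)] indm[OF borel_comp[OF assms(2)]]
          by (intro nn_integral_add borel_measurable_times) auto
        finally show ?thesis .
      qed
      have pmL: "(\<integral>\<^sup>+ b. (\<integral>\<^sup>+ y. indicator B y * g y \<partial>(P b)) \<partial>cond)
          = (\<integral>\<^sup>+ b. (\<integral>\<^sup>+ y. indicator B y * ennreal (lq_pow q b) \<partial>(P b)) \<partial>cond)"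
        if Bm[measurable]: "B \<in> sets X" for B
      proof -
        have j1: "(\<lambda>(b,y). indicator B y * ennreal (lq_pow q (betaA Theta b))) \<in> borel_measurable (borel \<Otimes>\<^sub>M X)"
          unfolding betaA_eq by measurable
        have j2: "(\<lambda>(b,y). indicator B y * ennreal (lq_pow q b)) \<in> borel_measurable (borel \<Otimes>\<^sub>M X)"
          by measurable
        have "(\<integral>\<^sup>+ b. (\<integral>\<^sup>+ y. indicator B y * ennreal (lq_pow q (betaA Theta b)) \<partial>(P b)) \<partial>cond)
          = (\<integral>\<^sup>+ b. (\<integral>\<^sup>+ y. indicator B y * ennreal (lq_pow q b) \<partial>(P b)) \<partial>cond)"
          unfolding cond_int[OF int_meas[OF j1 Pm sP]] cond_int[OF int_meas[OF j2 Pm sP]]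
        proof (intro nn_integral_cong)
          fix b show "indicator Theta b / pT * (\<integral>\<^sup>+ y. indicator B y * ennreal (lq_pow q (betaA Theta b)) \<partial>(P b))
            = indicator Theta b / pT * (\<integral>\<^sup>+ y. indicator B y * ennreal (lq_pow q b) \<partial>(P b))"
            by (cases "b \<in> Theta") (simp_all add: betaA_eq)
        qed
        then show ?thesis using pmA[OF Bm] by simp
      qed
      define Ak where "Ak k = A \<inter> {y \<in> space X. g y \<le> of_nat k}" for k :: nat
      have Akm[measurable]: "Ak k \<in> sets X" for k unfolding Ak_def by measurable
      have condfin: "(\<integral>\<^sup>+ b. c \<partial>cond) < top" if "c < top" for c :: ennreal
      proof -
        have "(\<integral>\<^sup>+ b. c \<partial>cond) = (\<integral>\<^sup>+ b. indicator Theta b / pT * c \<partial>prior)"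
          by (rule cond_int) simp
        also have "\<dots> \<le> (\<integral>\<^sup>+ b. c / pT \<partial>prior)"
          by (intro nn_integral_mono) (auto simp: indicator_def ennreal_times_divide mult.commute)
        also have "\<dots> = c / pT * emeasure prior (space prior)" by simp
        also have "\<dots> = c / pT" using prob_space.emeasure_space_1[OF assms(6)] by simp
        also have "\<dots> < top"
        proof -
          have "c \<noteq> top" "pT \<noteq> 0" using that pT0 by auto
          then have "c / pT \<noteq> top" by (simp add: ennreal_divide_eq_top_iff)
          then show ?thesis by (simp add: top.not_eq_extremum)
        qed
        finally show ?thesis .
      qed
      have step: "(\<integral>\<^sup>+ b. (\<integral>\<^sup>+ y. indicator (Ak k) y * g y \<partial>(P b)) \<partial>cond)
          \<le> (\<integral>\<^sup>+ b. (\<integral>\<^sup>+ y. indicator (Ak k) y * ennreal (lq_pow q (bh y - b)) \<partial>(P b)) \<partial>cond)" for k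
      proof -
        let ?G = "(\<integral>\<^sup>+ b. (\<integral>\<^sup>+ y. indicator (Ak k) y * g y \<partial>(P b)) \<partial>cond)"
        let ?X = "(\<integral>\<^sup>+ b. (\<integral>\<^sup>+ y. indicator (Ak k) y * ennreal (lq_pow q (bh y - b)) \<partial>(P b)) \<partial>cond)"
        have "?G \<le> (\<integral>\<^sup>+ b. (\<integral>\<^sup>+ y. of_nat k \<partial>(P b)) \<partial>cond)"
          by (intro nn_integral_mono) (auto simp: Ak_def indicator_def)
        also have "\<dots> = (\<integral>\<^sup>+ b. of_nat k \<partial>cond)"
          using prob_space.emeasure_space_1[OF assms(3)] by simp
        also have "\<dots> < top" by (rule condfin) (simp add: of_nat_less_top)
        finally have fin: "?G < top" .
        have pw: "c' * (indicator (Ak k) y * g y) \<le> t * (indicator (Ak k) y * ennreal (lq_pow q (bh y - b))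
           + indicator (Ak k) y * ennreal (lq_pow q b))" for b y
        proof (cases "y \<in> Ak k")
          case True
          then have "c' * g y < ennreal (lq_pow q (bh y))" by (simp add: Ak_def A_def)
          also have "\<dots> \<le> ennreal (2 powr q * (lq_pow q (bh y - b) + lq_pow q b))"
            using lq_pow_tri[OF assms(1), of "bh y - b" b] by (intro ennreal_leI) simp
          also have "\<dots> = t * (ennreal (lq_pow q (bh y - b)) + ennreal (lq_pow q b))"
            unfolding t_def by (simp add: ennreal_mult lq_pow_nonneg ennreal_plus[symmetric] del: ennreal_plus)
          finally show ?thesis using True by simp
        qed simp
        have "c' * ?G = (\<integral>\<^sup>+ b. (\<integral>\<^sup>+ y. c' * (indicator (Ak k) y * g y) \<partial>(P b)) \<partial>cond)"
          by (rule II_cmult[OF _ Pm scond sPb, symmetric]) measurable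
        also have "\<dots> \<le> (\<integral>\<^sup>+ b. (\<integral>\<^sup>+ y. t * (indicator (Ak k) y * ennreal (lq_pow q (bh y - b))
           + indicator (Ak k) y * ennreal (lq_pow q b)) \<partial>(P b)) \<partial>cond)"
          using pw by (intro nn_integral_mono) auto
        also have "\<dots> = t * (\<integral>\<^sup>+ b. (\<integral>\<^sup>+ y. indicator (Ak k) y * ennreal (lq_pow q (bh y - b))
           + indicator (Ak k) y * ennreal (lq_pow q b) \<partial>(P b)) \<partial>cond)"
          by (rule II_cmult[OF _ Pm scond sPb]) measurable
        also have "\<dots> = t * (?X + (\<integral>\<^sup>+ b. (\<integral>\<^sup>+ y. indicator (Ak k) y * ennreal (lq_pow q b) \<partial>(P b)) \<partial>cond))"
        proof -
          have "(\<integral>\<^sup>+ b. (\<integral>\<^sup>+ y. indicator (Ak k) y * ennreal (lq_pow q (bh y - b))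
           + indicator (Ak k) y * ennreal (lq_pow q b) \<partial>(P b)) \<partial>cond) = ?X + (\<integral>\<^sup>+ b. (\<integral>\<^sup>+ y. indicator (Ak k) y * ennreal (lq_pow q b) \<partial>(P b)) \<partial>cond)"
            by (rule II_add[OF _ _ Pm scond sPb]) measurable
          then show ?thesis by simp
        qed
        also have "\<dots> = t * (?X + ?G)" using pmL[OF Akm] by simp
        finally have "2 * t * ?G \<le> t * (?X + ?G)" unfolding c'_def .
        then show ?thesis using ennreal_cancel_aux[OF t0 fin] by simp
      qed
      have GX: "(\<integral>\<^sup>+ b. (\<integral>\<^sup>+ y. indicator A y * ennreal (lq_pow q b) \<partial>(P b)) \<partial>cond)
          \<le> (\<integral>\<^sup>+ b. (\<integral>\<^sup>+ y. indicator A y * ennreal (lq_pow q (bh y - b)) \<partial>(P b)) \<partial>cond)"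
      proof -
        have pwsup: "indicator A y * g y = (SUP k. indicator (Ak k) y * g y)" for y
        proof (cases "y \<in> A")
          case True
          then have "c' * g y < top" by (simp add: A_def) (meson order.strict_trans top_greatest ennreal_less_top)
          moreover have "g y \<le> c' * g y" using mult_right_mono[OF c'1, of "g y"] by simp
          ultimately have "g y < top" by (meson le_less_trans)
          then obtain n where n: "g y < of_nat n" using ennreal_Ex_less_of_nat by blast
          have "g y \<le> (SUP k. indicator (Ak k) y * g y)"
            using True n by (intro SUP_upper2[of n]) (auto simp: Ak_def A_def)
          moreover have "(SUP k. indicator (Ak k) y * g y) \<le> g y"
            by (intro SUP_least) (auto simp: indicator_def)
          ultimately show ?thesis using True by simp
        next
          case False then show ?thesis by (simp add: Ak_def)
        qed
        have incA: "incseq (\<lambda>k y. indicator (Ak k) y * g y)"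
          by (auto simp: incseq_def le_fun_def indicator_def Ak_def intro: order_trans)
        have incB: "incseq (\<lambda>k b. \<integral>\<^sup>+ y. indicator (Ak k) y * g y \<partial>(P b))"
          using incA by (auto simp: incseq_def le_fun_def intro!: nn_integral_mono)
        have "(\<integral>\<^sup>+ b. (\<integral>\<^sup>+ y. indicator A y * g y \<partial>(P b)) \<partial>cond)
            = (\<integral>\<^sup>+ b. (SUP k. \<integral>\<^sup>+ y. indicator (Ak k) y * g y \<partial>(P b)) \<partial>cond)"
        proof (intro nn_integral_cong)
          fix b
          have "(\<integral>\<^sup>+ y. indicator A y * g y \<partial>(P b)) = (\<integral>\<^sup>+ y. (SUP k. indicator (Ak k) y * g y) \<partial>(P b))"
            using pwsup by simp
          also have "\<dots> = (SUP k. \<integral>\<^sup>+ y. indicator (Ak k) y * g y \<partial>(P b))"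
            by (rule nn_integral_monotone_convergence_SUP[OF incA]) (rule inner_meas[OF _ sPb], measurable)
          finally show "(\<integral>\<^sup>+ y. indicator A y * g y \<partial>(P b)) = (SUP k. \<integral>\<^sup>+ y. indicator (Ak k) y * g y \<partial>(P b))" .
        qed
        also have "\<dots> = (SUP k. (\<integral>\<^sup>+ b. (\<integral>\<^sup>+ y. indicator (Ak k) y * g y \<partial>(P b)) \<partial>cond))"
          by (rule nn_integral_monotone_convergence_SUP[OF incB]) (rule int_meas[OF _ Pm scond], measurable)
        also have "\<dots> \<le> (\<integral>\<^sup>+ b. (\<integral>\<^sup>+ y. indicator A y * ennreal (lq_pow q (bh y - b)) \<partial>(P b)) \<partial>cond)"
        proof (intro SUP_least)
          fix k
          have "(\<integral>\<^sup>+ b. (\<integral>\<^sup>+ y. indicator (Ak k) y * ennreal (lq_pow q (bh y - b)) \<partial>(P b)) \<partial>cond)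
             \<le> (\<integral>\<^sup>+ b. (\<integral>\<^sup>+ y. indicator A y * ennreal (lq_pow q (bh y - b)) \<partial>(P b)) \<partial>cond)"
            by (intro nn_integral_mono) (auto simp: indicator_def Ak_def)
          with step[of k] show "(\<integral>\<^sup>+ b. (\<integral>\<^sup>+ y. indicator (Ak k) y * g y \<partial>(P b)) \<partial>cond)
             \<le> (\<integral>\<^sup>+ b. (\<integral>\<^sup>+ y. indicator A y * ennreal (lq_pow q (bh y - b)) \<partial>(P b)) \<partial>cond)"
            by (rule order_trans)
        qed
        finally show ?thesis using pmL[OF Am] by simp
      qed
      have rT: "risk T b = (\<integral>\<^sup>+ y. indicator A y * ennreal (lq_pow q b)
          + indicator (space X - A) y * ennreal (lq_pow q (bh y - b)) \<partial>(P b))" for b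
        unfolding risk_def
      proof (intro nn_integral_cong)
        fix y assume "y \<in> space (P b)"
        then have "y \<in> space X" using spP by simp
        then show "ennreal (lq_pow q (T y - b)) = indicator A y * ennreal (lq_pow q b)
          + indicator (space X - A) y * ennreal (lq_pow q (bh y - b))"
          by (cases "y \<in> A") (auto simp: T_def lq_pow_uminus)
      qed
      have rbh: "risk bh b = (\<integral>\<^sup>+ y. indicator A y * ennreal (lq_pow q (bh y - b))
          + indicator (space X - A) y * ennreal (lq_pow q (bh y - b)) \<partial>(P b))" for b
        unfolding risk_def
      proof (intro nn_integral_cong)
        fix y assume "y \<in> space (P b)"
        then have "y \<in> space X" using spP by simp
        then show "ennreal (lq_pow q (bh y - b)) = indicator A y * ennreal (lq_pow q (bh y - b))
          + indicator (space X - A) y * ennreal (lq_pow q (bh y - b))"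
          by (cases "y \<in> A") auto
      qed
      have cmp: "integral\<^sup>N cond (risk T) \<le> integral\<^sup>N cond (risk bh)"
      proof -
        have "integral\<^sup>N cond (risk T) = (\<integral>\<^sup>+ b. (\<integral>\<^sup>+ y. indicator A y * ennreal (lq_pow q b) \<partial>(P b)) \<partial>cond)
          + (\<integral>\<^sup>+ b. (\<integral>\<^sup>+ y. indicator (space X - A) y * ennreal (lq_pow q (bh y - b)) \<partial>(P b)) \<partial>cond)"
          unfolding rT by (rule II_add[OF _ _ Pm scond sPb]) measurable
        also have "\<dots> \<le> (\<integral>\<^sup>+ b. (\<integral>\<^sup>+ y. indicator A y * ennreal (lq_pow q (bh y - b)) \<partial>(P b)) \<partial>cond)
          + (\<integral>\<^sup>+ b. (\<integral>\<^sup>+ y. indicator (space X - A) y * ennreal (lq_pow q (bh y - b)) \<partial>(P b)) \<partial>cond)"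
          using GX by (rule add_right_mono)
        also have "\<dots> = integral\<^sup>N cond (risk bh)"
          unfolding rbh by (rule II_add[OF _ _ Pm scond sPb, symmetric]) measurable
        finally show ?thesis .
      qed
      have inside: "(\<integral>\<^sup>+ b. risk T b * indicator Theta b \<partial>prior) \<le> S bh"
      proof -
        have "(\<integral>\<^sup>+ b. risk T b * indicator Theta b \<partial>prior) = pT * integral\<^sup>N cond (risk T)"
          by (rule theta_part[OF riskm[OF Tm sP]])
        also have "\<dots> \<le> pT * integral\<^sup>N cond (risk bh)"
          using cmp by (rule mult_left_mono) simp
        also have "\<dots> = (\<integral>\<^sup>+ b. risk bh b * indicator Theta b \<partial>prior)"
          by (rule theta_part[OF riskm[OF bhm sP], symmetric])
        also have "\<dots> \<le> (\<integral>\<^sup>+ b. S bh * indicator Theta b \<partial>prior)"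
        proof (intro nn_integral_mono)
          fix b show "risk bh b * indicator Theta b \<le> S bh * indicator Theta b"
            by (cases "b \<in> Theta") (auto simp: risk_def S_def intro: SUP_upper)
        qed
        also have "\<dots> = S bh * pT"
          using nn_integral_cmult_indicator[OF Th_prior, of "S bh"] by (simp add: pT_def)
        also have "\<dots> \<le> S bh * 1"
          using pT1 by (rule mult_left_mono) simp
        finally show ?thesis by simp
      qed
      have jm: "(\<lambda>(b,y). (g y + ennreal (lq_pow q b)) * indicator (- Theta) b) \<in> borel_measurable (borel \<Otimes>\<^sub>M X)"
        using borel_comp[OF assms(2)] by measurable
      have outside: "(\<integral>\<^sup>+ b. risk T b * indicator (- Theta) b \<partial>prior) \<le> ennreal C * rem"
      proof -
        have "(\<integral>\<^sup>+ b. risk T b * indicator (- Theta) b \<partial>prior) \<le> (\<integral>\<^sup>+ b. ennreal C *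
           (\<integral>\<^sup>+ y. (g y + ennreal (lq_pow q b)) * indicator (- Theta) b \<partial>(P b)) \<partial>prior)"
        proof (intro nn_integral_mono)
          fix b show "risk T b * indicator (- Theta) b \<le> ennreal C *
             (\<integral>\<^sup>+ y. (g y + ennreal (lq_pow q b)) * indicator (- Theta) b \<partial>(P b))"
          proof (cases "b \<in> Theta")
            case False
            have "risk T b \<le> (\<integral>\<^sup>+ y. ennreal C * ((g y + ennreal (lq_pow q b)) * indicator (- Theta) b) \<partial>(P b))"
              unfolding risk_def
            proof (intro nn_integral_mono)
              fix y assume "y \<in> space (P b)"
              then have yX: "y \<in> space X" using spP by simp
              have "lq_pow q (T y - b) \<le> 2 powr q * (lq_pow q (T y) + lq_pow q b)"
                using lq_pow_tri[OF assms(1), of "T y" "-b"] by (simp add: lq_pow_uminus)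
              then have "ennreal (lq_pow q (T y - b)) \<le> ennreal (2 powr q * (lq_pow q (T y) + lq_pow q b))"
                by (rule ennreal_leI)
              also have "\<dots> = t * (ennreal (lq_pow q (T y)) + ennreal (lq_pow q b))"
                unfolding t_def by (simp add: ennreal_mult lq_pow_nonneg ennreal_plus[symmetric] del: ennreal_plus)
              also have "\<dots> \<le> t * (c' * g y + c' * ennreal (lq_pow q b))"
                using TL[OF yX] mult_right_mono[OF c'1, of "ennreal (lq_pow q b)"]
                by (intro mult_left_mono add_mono) auto
              also have "\<dots> = ennreal C * ((g y + ennreal (lq_pow q b)) * indicator (- Theta) b)"
                using False by (simp add: Ct distrib_left mult.assoc)
              finally show "ennreal (lq_pow q (T y - b)) \<le> ennreal C * ((g y + ennreal (lq_pow q b)) * indicator (- Theta) b)" .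
            qed
            also have "\<dots> = ennreal C * (\<integral>\<^sup>+ y. (g y + ennreal (lq_pow q b)) * indicator (- Theta) b \<partial>(P b))"
              by (rule nn_integral_cmult[OF inner_meas[OF jm sPb]])
            finally show ?thesis using False by simp
          qed simp
        qed
        also have "\<dots> = ennreal C * rem"
          unfolding rem_def remainder_term_def
          by (rule nn_integral_cmult[OF int_meas[OF jm Pm sP]])
        finally show ?thesis .
      qed
      show ?thesis using step1 split inside outside add_mono by (metis order_trans)
    qed

    then have "bayes_risk X P prior q \<le> (INF bh\<in>borel_measurable X. S bh + ennreal C * rem)"
      by (rule INF_greatest)
    also have "\<dots> = minimax_risk X P Theta q + ennreal C * rem"
      unfolding minimax_risk_def S_def
      by (rule INF_add_const_set) (use borel_measurable_const[of "0::real^'n" X] in blast)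
    finally show "bayes_risk X P prior q \<le> minimax_risk X P Theta q + ennreal C * remainder_term P prior Theta q g"
      unfolding rem_def .
  qed
qed

end
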